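(* For any $s,g$, every graph $G=(V,E)$ satisfying $S(s,g)$ has the following property: for every $D\subseteq V$ with $|D|\le \frac{gs}{4}$ there exists a set $Z\subseteq V$ with $|Z|\le \frac{2|D|}{s}$ such that the induced graph $G[V\setminus(D\cup Z)]$ satisfies $S\left(\frac{s}{2},\frac{g}{2}\right)$.
   Context: For a graph $H$ and $A\subseteq V(H)$, $N_H(A)$ is the set of vertices of $H$ outside $A$ having at least one neighbor in $A$. $H$ satisfies $S(s,g)$ if every $A\subseteq V(H)$ with $|A|\le g$ has $|N_H(A)|\ge s|A|$ (for an induced subgraph, neighborhoods are taken inside that subgraph). *)

theory Defs
  imports Complex_Main
begin

definition simple_graph :: "'a set \<Rightarrow> ('a \<Rightarrow> 'a \<Rightarrow> bool) \<Rightarrow> bool" where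
  "simple_graph V E \<longleftrightarrow> finite V \<and> (\<forall>u v. E u v \<longrightarrow> E v u) \<and> (\<forall>v. \<not> E v v)"

definition nbhd :: "'a set \<Rightarrow> ('a \<Rightarrow> 'a \<Rightarrow> bool) \<Rightarrow> 'a set \<Rightarrow> 'a set" where
  "nbhd W E A = {v \<in> W - A. \<exists>a\<in>A. E a v}"

text \<open>The induced subgraph on W satisfies S(s,g).\<close>
definition expansion_S :: "'a set \<Rightarrow> ('a \<Rightarrow> 'a \<Rightarrow> bool) \<Rightarrow> real \<Rightarrow> real \<Rightarrow> bool" where
  "expansion_S W E s g \<longleftrightarrow>
     (\<forall>A. A \<subseteq> W \<and> real (card A) \<le> g \<longrightarrow> real (card (nbhd W E A)) \<ge> s * real (card A))"

end

theory Submission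
  imports Defs
begin

theorem lemma2p2:
  fixes V :: "'a set" and E :: "'a \<Rightarrow> 'a \<Rightarrow> bool" and s g :: real
  assumes "simple_graph V E" and "s > 0" and "g > 0"
    and "expansion_S V E s g"
  shows "\<forall>D. D \<subseteq> V \<and> real (card D) \<le> g * s / 4 \<longrightarrow>
           (\<exists>Z. Z \<subseteq> V \<and> real (card Z) \<le> 2 * real (card D) / s \<and>
                expansion_S (V - (D \<union> Z)) E (s / 2) (g / 2))"
proof (intro allI impI)
  fix D assume hD: "D \<subseteq> V \<and> real (card D) \<le> g * s / 4"
  have finV: "finite V" using assms(1) by (simp add: simple_graph_def)
  define W where "W = V - D"
  have finW: "finite W" using finV W_def by simp
  have finD: "finite D" using hD finV finite_subset by blast
  define P where "P = (\<lambda>Z. Z \<subseteq> W \<and> real (card Z) \<le> g \<and>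
      real (card (nbhd W E Z)) \<le> (s/2) * real (card Z))"
  have bnd: "real (card Z) \<le> 2 * real (card D) / s" if "P Z" for Z
  proof -
    have ZW: "Z \<subseteq> W" and Zg: "real (card Z) \<le> g"
      and ZN: "real (card (nbhd W E Z)) \<le> (s/2) * real (card Z)" using that P_def by auto
    have "nbhd V E Z \<subseteq> nbhd W E Z \<union> D" unfolding nbhd_def W_def by auto
    hence "card (nbhd V E Z) \<le> card (nbhd W E Z \<union> D)"
      by (intro card_mono) (auto simp: finD nbhd_def finW)
    also have "\<dots> \<le> card (nbhd W E Z) + card D" by (rule card_Un_le)
    finally have c: "real (card (nbhd V E Z)) \<le> real (card (nbhd W E Z)) + real (card D)"
      by linarith
    have "s * real (card Z) \<le> real (card (nbhd V E Z))"
      using assms(4) ZW Zg W_def unfolding expansion_S_def by auto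
    hence "(s/2) * real (card Z) \<le> real (card D)" using c ZN by linarith
    thus ?thesis using assms(2) by (simp add: field_simps)
  qed
  have P0: "P {}" by (simp add: P_def nbhd_def assms(3) less_imp_le)
  have "\<forall>Y. P Y \<longrightarrow> card Y < card W + 1"
  proof (intro allI impI)
    fix Y assume "P Y"
    hence "Y \<subseteq> W" by (simp add: P_def)
    hence "card Y \<le> card W" using finW by (rule card_mono[rotated])
    thus "card Y < card W + 1" by simp
  qed
  then obtain Z where PZ: "P Z" and maxZ: "\<And>Y. P Y \<Longrightarrow> card Y \<le> card Z"
    using ex_has_greatest_nat[of P "{}" card "card W + 1"] P0 by blast
  have ZW: "Z \<subseteq> W" and ZN: "real (card (nbhd W E Z)) \<le> (s/2) * real (card Z)"
    using PZ P_def by auto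
  have finZ: "finite Z" using ZW finW finite_subset by blast
  have bZ: "real (card Z) \<le> 2 * real (card D) / s" using bnd PZ .
  have bZ2: "real (card Z) \<le> g / 2"
  proof -
    have "2 * real (card D) / s \<le> 2 * (g * s / 4) / s"
      using hD assms(2) by (intro divide_right_mono) auto
    also have "\<dots> = g/2" using assms(2) by simp
    finally show ?thesis using bZ by linarith
  qed
  show "\<exists>Z. Z \<subseteq> V \<and> real (card Z) \<le> 2 * real (card D) / s \<and>
                expansion_S (V - (D \<union> Z)) E (s / 2) (g / 2)"
  proof (intro exI conjI)
    show "Z \<subseteq> V" using ZW W_def by auto
    show "real (card Z) \<le> 2 * real (card D) / s" by (rule bZ)
    show "expansion_S (V - (D \<union> Z)) E (s / 2) (g / 2)"
      unfolding expansion_S_def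
    proof (intro allI impI, rule ccontr)
      fix A assume hA: "A \<subseteq> V - (D \<union> Z) \<and> real (card A) \<le> g / 2"
        and neg: "\<not> s / 2 * real (card A) \<le> real (card (nbhd (V - (D \<union> Z)) E A))"
      have AWZ: "A \<subseteq> W - Z" using hA W_def by auto
      have finA: "finite A" using AWZ finW finite_subset by blast
      have eq: "V - (D \<union> Z) = W - Z" using W_def by auto
      have Ane: "A \<noteq> {}" using neg by (auto simp: nbhd_def)
      have cU: "card (Z \<union> A) = card Z + card A"
        using AWZ finZ finA by (intro card_Un_disjoint) auto
      have "nbhd W E (Z \<union> A) \<subseteq> nbhd W E Z \<union> nbhd (W - Z) E A"
        unfolding nbhd_def by auto
      hence "card (nbhd W E (Z \<union> A)) \<le> card (nbhd W E Z \<union> nbhd (W - Z) E A)"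
        by (intro card_mono) (auto simp: finW nbhd_def)
      also have "\<dots> \<le> card (nbhd W E Z) + card (nbhd (W - Z) E A)" by (rule card_Un_le)
      finally have c: "real (card (nbhd W E (Z \<union> A))) \<le>
          real (card (nbhd W E Z)) + real (card (nbhd (W - Z) E A))" by linarith
      have n2: "real (card (nbhd (W - Z) E A)) < s / 2 * real (card A)" using neg eq by simp
      have "real (card (Z \<union> A)) = real (card Z) + real (card A)" using cU by simp
      moreover have "real (card A) \<le> g/2" using hA by simp
      ultimately have g1: "real (card (Z \<union> A)) \<le> g" using bZ2 by linarith
      have "real (card (nbhd W E (Z \<union> A))) \<le> s/2 * real (card Z) + s / 2 * real (card A)"
        using c ZN n2 by linarith
      also have "\<dots> = s/2 * real (card (Z \<union> A))" using cU by (simp add: algebra_simps)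
      finally have "P (Z \<union> A)"
        unfolding P_def using ZW AWZ g1 by auto
      hence "card (Z \<union> A) \<le> card Z" by (rule maxZ)
      moreover have "card A > 0" using Ane finA by auto
      ultimately show False using cU by simp
    qed
  qed
qed

end
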